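(* Let $(R_1,+_1,\circ_1)$ and $(R_2,+_2,\circ_2)$ be commutative multiplicative hyperrings with nonzero identity. Let $\alpha_1$ be a good endomorphism of $R_1$ and $\alpha_2$ a good endomorphism of $R_2$, and let $\bar\alpha(r_1,r_2)=(\alpha_1(r_1),\alpha_2(r_2))$ on $R_1\times R_2$. Let $I_1$ be a hyperideal of $R_1$. Then $I_1$ is an $\alpha_1$-prime hyperideal of $R_1$ if and only if $I_1\times R_2$ is an $\bar\alpha$-prime hyperideal of $R_1\times R_2$.
   Context: A multiplicative hyperring is an abelian group $(R,+)$ with a hyperoperation $\circ:R\times R\to \mathcal P^*(R)$ (nonempty subsets) such that $a\circ(b\circ c)=(a\circ b)\circ c$, $a\circ(b+c)\subseteq a\circ b+a\circ c$, $(b+c)\circ a\subseteq b\circ a+c\circ a$, and $a\circ(-b)=(-a)\circ b=-(a\circ b)$. Products of subsets are unions of elementwise products. Commutative means $a\circ b=b\circ a$. An identity $1$ satisfies $a\in1\circ a$ for all $a$. A hyperideal is a nonempty $I$ closed under subtraction with $r\circ x\subseteq I$ for $r\in R$, $x\in I$. Standing assumption: all hyperideals are $\mathbf C$-hyperideals, i.e. for every finite product $A=r_1\circ\cdots\circ r_n$, $A\cap I\neq\emptyset$ implies $A\subseteq I$. A good endomorphism $\alpha$ satisfies $\alpha(x+y)=\alpha(x)+\alpha(y)$ and $\alpha(x\circ y)=\alpha(x)\circ\alpha(y)$. A hyperideal $I$ is $\alpha$-prime if for all $x,y$, $x\circ y\subseteq I$ implies $x\in I$ or $\alpha(y)\in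 I$. $R_1\times R_2$ is the multiplicative hyperring with componentwise addition and $(x_1,x_2)\circ(y_1,y_2)=\{(x,y): x\in x_1\circ_1 y_1,\ y\in x_2\circ_2 y_2\}$. The map $\bar\alpha$ is a good endomorphism of it. *)

theory Defs
  imports Main "HOL-Library.Product_Plus"
begin

text \<open>A multiplicative hyperring is modelled on a whole type 'a carrying an abelian
group (R,+) (type class ab_group_add), together with a hyperoperation
hm :: 'a => 'a => 'a set.\<close>

definition hset_mult :: "('a \<Rightarrow> 'a \<Rightarrow> 'a set) \<Rightarrow> 'a set \<Rightarrow> 'a set \<Rightarrow> 'a set" where
  "hset_mult hm A B = (\<Union>a\<in>A. \<Union>b\<in>B. hm a b)"

definition hset_plus :: "'a::plus set \<Rightarrow> 'a set \<Rightarrow> 'a set" where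
  "hset_plus A B = {x + y | x y. x \<in> A \<and> y \<in> B}"

definition mult_hyperring :: "('a::ab_group_add \<Rightarrow> 'a \<Rightarrow> 'a set) \<Rightarrow> bool" where
  "mult_hyperring hm \<longleftrightarrow>
     (\<forall>a b. hm a b \<noteq> {}) \<and>
     (\<forall>a b c. hset_mult hm {a} (hm b c) = hset_mult hm (hm a b) {c}) \<and>
     (\<forall>a b c. hm a (b + c) \<subseteq> hset_plus (hm a b) (hm a c)) \<and>
     (\<forall>a b c. hm (b + c) a \<subseteq> hset_plus (hm b a) (hm c a)) \<and>
     (\<forall>a b. hm a (- b) = uminus ` (hm a b) \<and> hm (- a) b = uminus ` (hm a b))"

definition commutative_hop :: "('a \<Rightarrow> 'a \<Rightarrow> 'a set) \<Rightarrow> bool" where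
  "commutative_hop hm \<longleftrightarrow> (\<forall>a b. hm a b = hm b a)"

definition hop_identity :: "('a \<Rightarrow> 'a \<Rightarrow> 'a set) \<Rightarrow> 'a \<Rightarrow> bool" where
  "hop_identity hm e \<longleftrightarrow> (\<forall>a. a \<in> hm e a)"

definition comm_mhr_nonzero_id :: "('a::ab_group_add \<Rightarrow> 'a \<Rightarrow> 'a set) \<Rightarrow> bool" where
  "comm_mhr_nonzero_id hm \<longleftrightarrow> mult_hyperring hm \<and> commutative_hop hm \<and>
     (\<exists>e. e \<noteq> 0 \<and> hop_identity hm e)"

definition hprod :: "('a \<Rightarrow> 'a \<Rightarrow> 'a set) \<Rightarrow> 'a \<Rightarrow> 'a list \<Rightarrow> 'a set" where
  "hprod hm x ys = fold (\<lambda>y S. hset_mult hm S {y}) ys {x}"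

text \<open>Hyperideal; by the standing assumption every hyperideal is a C-hyperideal.\<close>
definition hyperideal :: "('a::ab_group_add \<Rightarrow> 'a \<Rightarrow> 'a set) \<Rightarrow> 'a set \<Rightarrow> bool" where
  "hyperideal hm I \<longleftrightarrow> I \<noteq> {} \<and> (\<forall>x\<in>I. \<forall>y\<in>I. x - y \<in> I) \<and>
     (\<forall>r. \<forall>x\<in>I. hm r x \<subseteq> I) \<and>
     (\<forall>x ys. hprod hm x ys \<inter> I \<noteq> {} \<longrightarrow> hprod hm x ys \<subseteq> I)"

definition good_endo :: "('a::ab_group_add \<Rightarrow> 'a \<Rightarrow> 'a set) \<Rightarrow> ('a \<Rightarrow> 'a) \<Rightarrow> bool" where
  "good_endo hm \<alpha> \<longleftrightarrow> (\<forall>x y. \<alpha> (x + y) = \<alpha> x + \<alpha> y) \<and>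
     (\<forall>x y. \<alpha> ` (hm x y) = hm (\<alpha> x) (\<alpha> y))"

definition alpha_prime :: "('a::ab_group_add \<Rightarrow> 'a \<Rightarrow> 'a set) \<Rightarrow> ('a \<Rightarrow> 'a) \<Rightarrow> 'a set \<Rightarrow> bool" where
  "alpha_prime hm \<alpha> I \<longleftrightarrow> hyperideal hm I \<and>
     (\<forall>x y. hm x y \<subseteq> I \<longrightarrow> x \<in> I \<or> \<alpha> y \<in> I)"

text \<open>Product hyperoperation on R1 x R2 (addition is componentwise via Product_Plus).\<close>
definition prod_hop :: "('a \<Rightarrow> 'a \<Rightarrow> 'a set) \<Rightarrow> ('b \<Rightarrow> 'b \<Rightarrow> 'b set) \<Rightarrow>
    ('a \<times> 'b) \<Rightarrow> ('a \<times> 'b) \<Rightarrow> ('a \<times> 'b) set" where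
  "prod_hop hm1 hm2 p q = hm1 (fst p) (fst q) \<times> hm2 (snd p) (snd q)"

end

theory Submission
  imports Defs
begin

lemma prod_mult_step:
  "hset_mult (prod_hop hm1 hm2) (A \<times> B) {y} =
   hset_mult hm1 A {fst y} \<times> hset_mult hm2 B {snd y}"
  unfolding hset_mult_def prod_hop_def by auto

lemma prod_fold:
  "fold (\<lambda>y S. hset_mult (prod_hop hm1 hm2) S {y}) ys (A \<times> B) =
   fold (\<lambda>y S. hset_mult hm1 S {y}) (map fst ys) A \<times>
   fold (\<lambda>y S. hset_mult hm2 S {y}) (map snd ys) B"
  by (induction ys arbitrary: A B) (simp_all add: prod_mult_step)

lemma prod_hprod:
  "hprod (prod_hop hm1 hm2) x ys =
   hprod hm1 (fst x) (map fst ys) \<times> hprod hm2 (snd x) (map snd ys)"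
  unfolding hprod_def
  using prod_fold[of hm1 hm2 ys "{fst x}" "{snd x}"] by simp

theorem mainTheorem18:
  fixes hm1 :: "'a::ab_group_add \<Rightarrow> 'a \<Rightarrow> 'a set"
    and hm2 :: "'b::ab_group_add \<Rightarrow> 'b \<Rightarrow> 'b set"
    and \<alpha>1 :: "'a \<Rightarrow> 'a" and \<alpha>2 :: "'b \<Rightarrow> 'b"
    and I1 :: "'a set"
  assumes "comm_mhr_nonzero_id hm1" and "comm_mhr_nonzero_id hm2"
    and "good_endo hm1 \<alpha>1" and "good_endo hm2 \<alpha>2"
    and "hyperideal hm1 I1"
  shows "alpha_prime hm1 \<alpha>1 I1 \<longleftrightarrow>
         alpha_prime (prod_hop hm1 hm2) (map_prod \<alpha>1 \<alpha>2) (I1 \<times> (UNIV :: 'b set))"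
proof -
  have mh2: "mult_hyperring hm2" using assms(2)
    unfolding comm_mhr_nonzero_id_def by (rule conjunct1)
  have ne2a: "\<forall>a b. hm2 a b \<noteq> {}" using mh2[unfolded mult_hyperring_def] by (rule conjunct1)
  have ne2: "\<And>a b. hm2 a b \<noteq> {}" using ne2a by blast
  note H = assms(5)[unfolded hyperideal_def]
  have H1: "I1 \<noteq> {}" using H by (rule conjunct1)
  have H2: "\<forall>x\<in>I1. \<forall>y\<in>I1. x - y \<in> I1" using H by (elim conjE)
  have H3: "\<forall>r. \<forall>x\<in>I1. hm1 r x \<subseteq> I1" using H by (elim conjE)
  have H4: "\<forall>x ys. hprod hm1 x ys \<inter> I1 \<noteq> {} \<longrightarrow> hprod hm1 x ys \<subseteq> I1"
    using H by (elim conjE)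
  have hI: "hyperideal (prod_hop hm1 hm2) (I1 \<times> (UNIV :: 'b set))"
  proof -
    have C: "hprod (prod_hop hm1 hm2) x ys \<subseteq> I1 \<times> UNIV"
      if "hprod (prod_hop hm1 hm2) x ys \<inter> (I1 \<times> UNIV) \<noteq> {}" for x ys
    proof -
      from that obtain p where p: "p \<in> hprod (prod_hop hm1 hm2) x ys" "p \<in> I1 \<times> UNIV"
        by blast
      hence "fst p \<in> hprod hm1 (fst x) (map fst ys)" "fst p \<in> I1"
        unfolding prod_hprod by (simp_all add: mem_Times_iff)
      hence "hprod hm1 (fst x) (map fst ys) \<inter> I1 \<noteq> {}" by blast
      hence "hprod hm1 (fst x) (map fst ys) \<subseteq> I1"
        using H4 by blast
      thus ?thesis unfolding prod_hprod by blast
    qed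
    have h5: "I1 \<noteq> {}" "\<And>x y. x \<in> I1 \<Longrightarrow> y \<in> I1 \<Longrightarrow> x - y \<in> I1"
      "\<And>r x. x \<in> I1 \<Longrightarrow> hm1 r x \<subseteq> I1"
      using H1 H2 H3 by blast+
    have a: "I1 \<times> (UNIV :: 'b set) \<noteq> {}" using h5(1) by blast
    have b: "\<forall>x\<in>I1 \<times> (UNIV :: 'b set). \<forall>y\<in>I1 \<times> (UNIV :: 'b set). x - y \<in> I1 \<times> UNIV"
    proof (intro ballI)
      fix x y :: "'a \<times> 'b" assume "x \<in> I1 \<times> UNIV" "y \<in> I1 \<times> UNIV"
      hence "fst x \<in> I1" "fst y \<in> I1" by auto
      hence "fst x - fst y \<in> I1" by (rule h5(2))
      thus "x - y \<in> I1 \<times> UNIV" by (simp add: mem_Times_iff)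
    qed
    have c: "\<forall>r. \<forall>x\<in>I1 \<times> (UNIV :: 'b set). prod_hop hm1 hm2 r x \<subseteq> I1 \<times> UNIV"
    proof (intro allI ballI)
      fix r x :: "'a \<times> 'b" assume "x \<in> I1 \<times> UNIV"
      hence "fst x \<in> I1" by auto
      hence "hm1 (fst r) (fst x) \<subseteq> I1" by (rule h5(3))
      thus "prod_hop hm1 hm2 r x \<subseteq> I1 \<times> UNIV" unfolding prod_hop_def by blast
    qed
    show ?thesis unfolding hyperideal_def using a b c C by (intro conjI) auto
  qed
  show ?thesis
  proof
    assume P: "alpha_prime hm1 \<alpha>1 I1"
    show "alpha_prime (prod_hop hm1 hm2) (map_prod \<alpha>1 \<alpha>2) (I1 \<times> UNIV)"
      unfolding alpha_prime_def
    proof (intro conjI hI allI impI)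
      fix x y :: "'a \<times> 'b"
      assume "prod_hop hm1 hm2 x y \<subseteq> I1 \<times> UNIV"
      hence "hm1 (fst x) (fst y) \<subseteq> I1"
        using ne2[of "snd x" "snd y"] unfolding prod_hop_def by auto
      hence "fst x \<in> I1 \<or> \<alpha>1 (fst y) \<in> I1" using P unfolding alpha_prime_def by blast
      thus "x \<in> I1 \<times> UNIV \<or> map_prod \<alpha>1 \<alpha>2 y \<in> I1 \<times> UNIV"
        by (simp add: mem_Times_iff map_prod_def split_beta)
    qed
  next
    assume P: "alpha_prime (prod_hop hm1 hm2) (map_prod \<alpha>1 \<alpha>2) (I1 \<times> UNIV)"
    show "alpha_prime hm1 \<alpha>1 I1"
      unfolding alpha_prime_def
    proof (intro conjI assms(5) allI impI)
      fix x y
      assume "hm1 x y \<subseteq> I1"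
      hence "prod_hop hm1 hm2 (x, 0) (y, 0) \<subseteq> I1 \<times> (UNIV :: 'b set)"
        unfolding prod_hop_def by auto
      hence "(x, 0::'b) \<in> I1 \<times> UNIV \<or> map_prod \<alpha>1 \<alpha>2 (y, 0::'b) \<in> I1 \<times> UNIV"
        using P unfolding alpha_prime_def by blast
      thus "x \<in> I1 \<or> \<alpha>1 y \<in> I1" by auto
    qed
  qed
qed

end
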